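(* Let $G_{wy}$ and $G_{zx}$ be Lagrangian grid diagrams of the same size $n$ (in the $(w,y)$-plane and the $(z,x)$-plane respectively) such that $|\Delta t(c_i)|\neq|\Delta t(c'_j)|$ for every crossing $c_i$ of $G_{wy}$ and every crossing $c'_j$ of $G_{zx}$. Then there is a Lagrangian hypercube diagram whose $wy$- and $zx$-projections are $G_{wy}$ and $G_{zx}$.
   Context: Grid conventions. In a plane with coordinates $(a,b)$ (here $(a,b)=(w,y)$ or $(a,b)=(z,x)$), an immersed grid diagram of size $n$ is an $n\times n$ grid of unit cells in $[0,n]^2$ with two kinds of markings at centers of cells, each row and each column containing exactly one marking of each kind; joining each marking of the first kind to the marking of the second kind in its row by an $a$-parallel segment, and each marking of the second kind to the marking of the first kind in its column by a $b$-parallel segment, gives an oriented connected closed piecewise-linear curve, with no crossing information, viewed as an immersion $\gamma:\mathbb{R}/2\pi\mathbb{Z}\to\mathbb{R}^2$, $\theta\mapsto(a(\theta),b(\theta))$. It is a Lagrangian grid diagram if (1) $\int_0^{2\pi}b\,a'\,d\theta=0$ and (2) $\int_{\theta_0}^{\theta_1}b\,a'\,d\theta\neq0$ whenever $\theta_0\neq\theta_1$ and $\gamma(\theta_0)=\gamma(\theta_1)$. For a crossing $c=\gamma(\theta_0)=\gamma(\theta_1)$ put $|\Delta t(c)|=|\int_{\theta_0}^{\theta_1}b\,a'\,d\theta|$. Hypercube diagrams. Let $C=[0,n]^4$ with coordinates $(w,x,y,z)$. A flat is a product in which two coordinates range over $[0,n]$ and the other two over unit intervals $[k,k+1]$, named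 by its two full coordinates; a cube is a product in which three coordinates range over $[0,n]$ and one over a unit interval. Markings are points with coordinates in $\mathbb{Z}+\frac12$ labelled $W,X,Y,Z$. Marking conditions: each cube contains exactly one marking of each label; each cube contains exactly two flats containing exactly three markings; in each such flat the three markings form a right angle with rays parallel to coordinate axes; its vertex is $W$ iff the flat is a $zw$-flat, $X$ iff a $wx$-flat, $Y$ iff an $xy$-flat, $Z$ iff a $yz$-flat. Join each $W$ to an $X$ by a $w$-parallel segment, each $X$ to a $Y$ by an $x$-parallel segment, each $Y$ to a $Z$ by a $y$-parallel segment and each $Z$ to a $W$ by a $z$-parallel segment; the projections of this curve to the $(w,y)$- and $(z,x)$-planes are immersed grid diagrams (the $wy$- and $zx$-projections). A Lagrangian hypercube diagram is such a marked hypercube satisfying the marking conditions whose two projections are Lagrangian grid diagrams with $|\Delta t(c)|\neq|\Delta t(c')|$ for all crossings $c$ of the $zx$-projection and $c'$ of the $wy$-projection. *)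

theory Defs
  imports "HOL-Analysis.Analysis"
begin

text \<open>A cell of the n x n grid is indexed by (a,b) with a,b < n; its centre is
  (a + 1/2, b + 1/2).  A grid diagram is a pair (M1, M2) of the cells carrying
  markings of the first and of the second kind.\<close>

type_synonym cell = "nat \<times> nat"
type_synonym grid = "cell set \<times> cell set"

definition grid_diagram :: "nat \<Rightarrow> grid \<Rightarrow> bool" where
  "grid_diagram n G \<longleftrightarrow>
     fst G \<subseteq> {0..<n} \<times> {0..<n} \<and> snd G \<subseteq> {0..<n} \<times> {0..<n} \<and>
     (\<forall>b<n. \<exists>!a. (a, b) \<in> fst G) \<and> (\<forall>b<n. \<exists>!a. (a, b) \<in> snd G) \<and>
     (\<forall>a<n. \<exists>!b. (a, b) \<in> fst G) \<and> (\<forall>a<n. \<exists>!b. (a, b) \<in> snd G)"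

definition row_mark :: "cell set \<Rightarrow> nat \<Rightarrow> nat" where
  "row_mark M b = (THE a. (a, b) \<in> M)"

definition col_mark :: "cell set \<Rightarrow> nat \<Rightarrow> nat" where
  "col_mark M a = (THE b. (a, b) \<in> M)"

text \<open>From a first-kind marking go along its row (a-parallel) to the second-kind
  marking, then along that column (b-parallel) to the next first-kind marking.\<close>
definition grid_next :: "grid \<Rightarrow> cell \<Rightarrow> cell" where
  "grid_next G p = (let a' = row_mark (snd G) (snd p) in (a', col_mark (fst G) a'))"

text \<open>The associated curve is an immersed (nondegenerate) connected closed curve.\<close>
definition immersed_grid_diagram :: "nat \<Rightarrow> grid \<Rightarrow> bool" where
  "immersed_grid_diagram n G \<longleftrightarrow>
     grid_diagram n G \<and> 0 < n \<and> fst G \<inter> snd G = {} \<and>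
     (\<forall>p\<in>fst G. \<forall>q\<in>fst G. \<exists>k. (grid_next G ^^ k) p = q)"

definition grid_start :: "grid \<Rightarrow> cell" where
  "grid_start G = (0, col_mark (fst G) 0)"

text \<open>Vertices of the curve: even index = first-kind marking, odd index = second-kind.\<close>
definition grid_vertex :: "grid \<Rightarrow> nat \<Rightarrow> real \<times> real" where
  "grid_vertex G k =
     (let p = (grid_next G ^^ (k div 2)) (grid_start G);
          c = (if even k then p else (row_mark (snd G) (snd p), snd p))
      in (real (fst c) + 1/2, real (snd c) + 1/2))"

text \<open>The immersion gamma : R/2piZ -> R^2 (as a 2pi-periodic map on R), traversing the
  2n segments at constant speed in parameter.\<close>
definition grid_curve :: "nat \<Rightarrow> grid \<Rightarrow> real \<Rightarrow> real \<times> real" where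
  "grid_curve n G \<theta> =
     (let s = frac (\<theta> / (2 * pi)) * real (2 * n); k = nat \<lfloor>s\<rfloor>; t = s - real k
      in (1 - t) *\<^sub>R grid_vertex G k + t *\<^sub>R grid_vertex G (Suc k))"

definition grid_action :: "nat \<Rightarrow> grid \<Rightarrow> real \<Rightarrow> real \<Rightarrow> real" where
  "grid_action n G \<theta>0 \<theta>1 =
     (let f = (\<lambda>\<theta>. snd (grid_curve n G \<theta>) * deriv (\<lambda>s. fst (grid_curve n G s)) \<theta>)
      in if \<theta>0 \<le> \<theta>1 then integral {\<theta>0..\<theta>1} f else - integral {\<theta>1..\<theta>0} f)"

definition lagrangian_grid :: "nat \<Rightarrow> grid \<Rightarrow> bool" where
  "lagrangian_grid n G \<longleftrightarrow>
     immersed_grid_diagram n G \<and>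
     grid_action n G 0 (2 * pi) = 0 \<and>
     (\<forall>\<theta>0\<in>{0..<2*pi}. \<forall>\<theta>1\<in>{0..<2*pi}.
        \<theta>0 \<noteq> \<theta>1 \<and> grid_curve n G \<theta>0 = grid_curve n G \<theta>1 \<longrightarrow> grid_action n G \<theta>0 \<theta>1 \<noteq> 0)"

definition crossing_actions :: "nat \<Rightarrow> grid \<Rightarrow> real set" where
  "crossing_actions n G =
     {\<bar>grid_action n G \<theta>0 \<theta>1\<bar> | \<theta>0 \<theta>1. \<theta>0 \<in> {0..<2*pi} \<and> \<theta>1 \<in> {0..<2*pi} \<and>
        \<theta>0 \<noteq> \<theta>1 \<and> grid_curve n G \<theta>0 = grid_curve n G \<theta>1}"

datatype axis = Aw | Ax | Ay | Az
datatype label = LW | LX | LY | LZ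

text \<open>A marking point is given by its cell index p : axis -> nat (coordinates p k + 1/2);
  M l is the set of markings with label l.\<close>
type_synonym point4 = "axis \<Rightarrow> nat"
type_synonym marking = "label \<Rightarrow> point4 set"

definition marks :: "marking \<Rightarrow> (label \<times> point4) set" where
  "marks M = {(l, p). p \<in> M l}"

definition flat_marks :: "marking \<Rightarrow> axis \<Rightarrow> nat \<Rightarrow> axis \<Rightarrow> nat \<Rightarrow> (label \<times> point4) set" where
  "flat_marks M k1 m1 k2 m2 = {(l, p) \<in> marks M. p k1 = m1 \<and> p k2 = m2}"

definition right_angle_at :: "point4 \<Rightarrow> point4 \<Rightarrow> point4 \<Rightarrow> bool" where
  "right_angle_at v p q \<longleftrightarrow>
     (\<exists>i j. i \<noteq> j \<and> p i \<noteq> v i \<and> (\<forall>k. k \<noteq> i \<longrightarrow> p k = v k) \<and>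
            q j \<noteq> v j \<and> (\<forall>k. k \<noteq> j \<longrightarrow> q k = v k))"

text \<open>Vertex label vs. flat name: a zw-flat has fixed axes x,y; wx-flat fixed y,z;
  xy-flat fixed z,w; yz-flat fixed w,x.\<close>
definition vertex_label_ok :: "label \<Rightarrow> axis \<Rightarrow> axis \<Rightarrow> bool" where
  "vertex_label_ok l k1 k2 \<longleftrightarrow>
     (l = LW \<longleftrightarrow> {k1, k2} = {Ax, Ay}) \<and> (l = LX \<longleftrightarrow> {k1, k2} = {Ay, Az}) \<and>
     (l = LY \<longleftrightarrow> {k1, k2} = {Az, Aw}) \<and> (l = LZ \<longleftrightarrow> {k1, k2} = {Aw, Ax})"

definition marking_conditions :: "nat \<Rightarrow> marking \<Rightarrow> bool" where
  "marking_conditions n M \<longleftrightarrow>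
     (\<forall>l. \<forall>p\<in>M l. \<forall>k. p k < n) \<and>
     (\<forall>k. \<forall>m<n. \<forall>l. card {p \<in> M l. p k = m} = 1) \<and>
     (\<forall>k. \<forall>m<n. card {(k', m'). k' \<noteq> k \<and> m' < n \<and> card (flat_marks M k m k' m') = 3} = 2) \<and>
     (\<forall>k1 k2 m1 m2. k1 \<noteq> k2 \<and> m1 < n \<and> m2 < n \<and> card (flat_marks M k1 m1 k2 m2) = 3 \<longrightarrow>
        (\<exists>lv v l1 p1 l2 p2. flat_marks M k1 m1 k2 m2 = {(lv, v), (l1, p1), (l2, p2)} \<and>
           right_angle_at v p1 p2 \<and> vertex_label_ok lv k1 k2))"

text \<open>The joining segments W-X (w-parallel), X-Y (x-parallel), Y-Z (y-parallel),
  Z-W (z-parallel) exist.\<close>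
definition joinable :: "marking \<Rightarrow> bool" where
  "joinable M \<longleftrightarrow>
     (\<forall>p\<in>M LW. \<exists>q\<in>M LX. \<forall>k. k \<noteq> Aw \<longrightarrow> q k = p k) \<and>
     (\<forall>p\<in>M LX. \<exists>q\<in>M LY. \<forall>k. k \<noteq> Ax \<longrightarrow> q k = p k) \<and>
     (\<forall>p\<in>M LY. \<exists>q\<in>M LZ. \<forall>k. k \<noteq> Ay \<longrightarrow> q k = p k) \<and>
     (\<forall>p\<in>M LZ. \<exists>q\<in>M LW. \<forall>k. k \<noteq> Az \<longrightarrow> q k = p k)"

text \<open>wy-projection: plane (a,b) = (w,y); first kind = W (=Z), second kind = X (=Y).
  zx-projection: plane (a,b) = (z,x); first kind = Z (=Y), second kind = W (=X).\<close>
definition proj_wy :: "marking \<Rightarrow> grid" where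
  "proj_wy M = ((\<lambda>p. (p Aw, p Ay)) ` M LW, (\<lambda>p. (p Aw, p Ay)) ` M LX)"

definition proj_zx :: "marking \<Rightarrow> grid" where
  "proj_zx M = ((\<lambda>p. (p Az, p Ax)) ` M LZ, (\<lambda>p. (p Az, p Ax)) ` M LW)"

definition lagrangian_hypercube :: "nat \<Rightarrow> marking \<Rightarrow> bool" where
  "lagrangian_hypercube n M \<longleftrightarrow>
     marking_conditions n M \<and> joinable M \<and>
     lagrangian_grid n (proj_wy M) \<and> lagrangian_grid n (proj_zx M) \<and>
     (\<forall>d\<in>crossing_actions n (proj_zx M). \<forall>d'\<in>crossing_actions n (proj_wy M). d \<noteq> d')"

end

theory Submission
  imports Defs
begin


lemma cycle_lemma:
  fixes f :: "'a \<Rightarrow> 'a"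
  assumes fin: "finite S" and fS: "\<forall>x\<in>S. f x \<in> S" and inj: "inj_on f S" and p: "p \<in> S"
    and orb: "\<forall>q\<in>S. \<exists>k. (f^^k) p = q"
  shows "\<forall>k. (f^^k) p = (f^^(k mod card S)) p" "inj_on (\<lambda>k. (f^^k) p) {0..<card S}"
proof -
  define h where "h k = (f^^k) p" for k
  have hS: "h k \<in> S" for k by (induction k) (auto simp: h_def p fS)
  have hadd: "h (i + j) = (f^^i) (h j)" for i j by (simp add: h_def funpow_add)
  have cancel: "h (i + j) = h i \<Longrightarrow> h j = p" for i j
  proof (induction i)
    case 0 then show ?case by (simp add: h_def)
  next
    case (Suc i)
    have "f (h (i + j)) = f (h i)" using Suc.prems by (simp add: h_def)
    then have "h (i + j) = h i" using inj hS by (meson inj_onD)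
    then show ?case using Suc.IH by simp
  qed
  have "\<not> inj_on h {0..card S}"
  proof
    assume "inj_on h {0..card S}"
    then have "card (h ` {0..card S}) = card S + 1" by (simp add: card_image)
    moreover have "h ` {0..card S} \<subseteq> S" using hS by auto
    then have "card (h ` {0..card S}) \<le> card S" by (rule card_mono[OF fin])
    ultimately show False by simp
  qed
  then obtain i j where ij: "i < j" "h i = h j"
    unfolding inj_on_def by (metis linorder_neqE_nat)
  then have "h (j - i) = p" using cancel[of i "j - i"] by simp
  define d where "d = (LEAST d. 0 < d \<and> h d = p)"
  have d: "0 < d \<and> h d = p" unfolding d_def
    by (rule LeastI[of _ "j - i"]) (use ij \<open>h (j - i) = p\<close> in auto)
  have dmin: "0 < e \<Longrightarrow> e < d \<Longrightarrow> h e \<noteq> p" for e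
    unfolding d_def using not_less_Least by blast
  have hd: "h (x + d) = h x" for x using hadd[of x d] d by (simp add: h_def)
  have hq: "h (a + d * q) = h a" for a q
  proof (induction q)
    case (Suc q)
    have "a + d * Suc q = (a + d * q) + d" by simp
    then have "h (a + d * Suc q) = h (a + d * q)" using hd by metis
    then show ?case using Suc.IH by simp
  qed simp
  have per: "h k = h (k mod d)" for k
    using hq[of "k mod d" "k div d"] by simp
  have injd: "inj_on h {0..<d}"
  proof (rule inj_onI)
    fix a b assume a: "a \<in> {0..<d}" and b: "b \<in> {0..<d}" and e: "h a = h b"
    show "a = b"
    proof (rule ccontr)
      assume "a \<noteq> b"
      then consider "a < b" | "b < a" by arith
      then show False
      proof cases
        case 1 then have "h (a + (b - a)) = h a" using e by simp
        then have "h (b - a) = p" by (rule cancel)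
        moreover have "0 < b - a" "b - a < d" using 1 b by auto
        ultimately show False using dmin[of "b - a"] by blast
      next
        case 2 then have "h (b + (a - b)) = h b" using e by simp
        then have "h (a - b) = p" by (rule cancel)
        moreover have "0 < a - b" "a - b < d" using 2 a by auto
        ultimately show False using dmin[of "a - b"] by blast
      qed
    qed
  qed
  have "S = h ` {0..<d}"
  proof
    show "S \<subseteq> h ` {0..<d}"
    proof
      fix q assume "q \<in> S"
      then obtain k where "h k = q" using orb by (auto simp: h_def)
      then show "q \<in> h ` {0..<d}" using per[of k] d by auto
    qed
  qed (use hS in auto)
  then have cS: "card S = d" using card_image[OF injd] by simp
  have hfun: "h = (\<lambda>k. (f^^k) p)" by (simp add: h_def fun_eq_iff)
  show "\<forall>k. (f^^k) p = (f^^(k mod card S)) p"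
  proof
    fix k show "(f^^k) p = (f^^(k mod card S)) p" using per[of k] cS unfolding h_def by simp
  qed
  show "inj_on (\<lambda>k. (f^^k) p) {0..<card S}" using injd cS unfolding hfun by simp
qed



definition pseq :: "nat \<Rightarrow> (nat \<Rightarrow> nat) \<Rightarrow> bool" where
  "pseq n s \<longleftrightarrow> (\<forall>k. s k < n) \<and> (\<forall>i j. s i = s j \<longleftrightarrow> i mod n = j mod n) \<and> (\<forall>m<n. \<exists>k. s k = m)"

lemma mod_Suc_iff:
  assumes "0 < (n::nat)" shows "(Suc i mod n = Suc j mod n) \<longleftrightarrow> (i mod n = j mod n)"
proof
  assume e: "Suc i mod n = Suc j mod n"
  have "i mod n = (Suc i + (n - 1)) mod n" using assms by simp
  also have "\<dots> = (Suc i mod n + (n - 1)) mod n" by (rule mod_add_left_eq[symmetric])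
  also have "\<dots> = (Suc j mod n + (n - 1)) mod n" using e by simp
  also have "\<dots> = (Suc j + (n - 1)) mod n" by (rule mod_add_left_eq)
  also have "\<dots> = j mod n" using assms by simp
  finally show "i mod n = j mod n" .
next
  assume e: "i mod n = j mod n"
  have "Suc i mod n = Suc (i mod n) mod n" by (rule mod_Suc_eq[symmetric])
  also have "\<dots> = Suc (j mod n) mod n" using e by simp
  also have "\<dots> = Suc j mod n" by (rule mod_Suc_eq)
  finally show "Suc i mod n = Suc j mod n" .
qed

lemma pseqD:
  assumes "pseq n s"
  shows "s k < n" "s i = s j \<longleftrightarrow> i mod n = j mod n" "m < n \<Longrightarrow> \<exists>k. s k = m"
  using assms unfolding pseq_def by blast+

lemma pseq_shift:
  assumes ps: "pseq n s" and n0: "0 < n" shows "pseq n (\<lambda>k. s (Suc k))"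
  unfolding pseq_def
proof (intro conjI allI impI)
  show "s (Suc k) < n" for k by (rule pseqD(1)[OF ps])
  show "(s (Suc i) = s (Suc j)) = (i mod n = j mod n)" for i j
    using pseqD(2)[OF ps, of "Suc i" "Suc j"] mod_Suc_iff[OF n0, of i j] by simp
  show "\<exists>k. s (Suc k) = m" if mn: "m < n" for m
  proof -
    obtain k where k: "s k = m" using pseqD(3)[OF ps mn] by blast
    have "Suc (k + n - 1) = k + n" using n0 by simp
    moreover have "s (k + n) = s k" using pseqD(2)[OF ps, of "k + n" k] by simp
    ultimately have "s (Suc (k + n - 1)) = m" using k by simp
    then show ?thesis by blast
  qed
qed

lemma row_mark_in:
  assumes "\<forall>b<n. \<exists>!a. (a, b) \<in> M" "b < n" shows "(row_mark M b, b) \<in> M"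
proof -
  have "\<exists>!a. (a, b) \<in> M" using assms by blast
  then show ?thesis unfolding row_mark_def by (rule theI')
qed

lemma row_mark_eq:
  assumes "\<forall>b<n. \<exists>!a. (a, b) \<in> M" "(a, b) \<in> M" "b < n" shows "row_mark M b = a"
proof -
  have "\<exists>!a. (a, b) \<in> M" using assms by blast
  then show ?thesis unfolding row_mark_def using assms(2) by (rule the1_equality)
qed

lemma col_mark_in:
  assumes "\<forall>a<n. \<exists>!b. (a, b) \<in> M" "a < n" shows "(a, col_mark M a) \<in> M"
proof -
  have "\<exists>!b. (a, b) \<in> M" using assms by blast
  then show ?thesis unfolding col_mark_def by (rule theI')
qed

lemma col_mark_eq:
  assumes "\<forall>a<n. \<exists>!b. (a, b) \<in> M" "(a, b) \<in> M" "a < n" shows "col_mark M a = b"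
proof -
  have "\<exists>!b. (a, b) \<in> M" using assms by blast
  then show ?thesis unfolding col_mark_def using assms(2) by (rule the1_equality)
qed

lemma grid_seqs:
  assumes imm: "immersed_grid_diagram n G"
  shows "\<exists>\<alpha> \<beta>. pseq n \<alpha> \<and> pseq n \<beta> \<and> (\<forall>k. (\<alpha> k, \<beta> k) \<in> fst G) \<and> (\<forall>k. (\<alpha> (Suc k), \<beta> k) \<in> snd G)"
proof -
  define F where "F = fst G"
  define E where "E = snd G"
  have imm': "grid_diagram n G \<and> 0 < n \<and> fst G \<inter> snd G = {} \<and>
     (\<forall>p\<in>F. \<forall>q\<in>F. \<exists>k. (grid_next G ^^ k) p = q)"
    using imm unfolding immersed_grid_diagram_def F_def by assumption
  note gd = conjunct1[OF imm'] and n0 = conjunct1[OF conjunct2[OF imm']]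
    and orb0 = conjunct2[OF conjunct2[OF conjunct2[OF imm']]]
  have gd': "F \<subseteq> {0..<n} \<times> {0..<n} \<and> E \<subseteq> {0..<n} \<times> {0..<n} \<and>
     (\<forall>b<n. \<exists>!a. (a, b) \<in> F) \<and> (\<forall>b<n. \<exists>!a. (a, b) \<in> E) \<and>
     (\<forall>a<n. \<exists>!b. (a, b) \<in> F) \<and> (\<forall>a<n. \<exists>!b. (a, b) \<in> E)"
    using gd unfolding grid_diagram_def F_def E_def by assumption
  note Fb = conjunct1[OF gd'] and Eb = conjunct1[OF conjunct2[OF gd']]
    and Fr = conjunct1[OF conjunct2[OF conjunct2[OF gd']]]
    and Er = conjunct1[OF conjunct2[OF conjunct2[OF conjunct2[OF gd']]]]
    and Fc = conjunct1[OF conjunct2[OF conjunct2[OF conjunct2[OF conjunct2[OF gd']]]]]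
    and Ec = conjunct2[OF conjunct2[OF conjunct2[OF conjunct2[OF conjunct2[OF gd']]]]]
  define f where "f = grid_next G"
  have fdef: "f p = (row_mark E (snd p), col_mark F (row_mark E (snd p)))" for p
    unfolding f_def grid_next_def E_def F_def Let_def by simp
  have fS: "\<forall>x\<in>F. f x \<in> F"
  proof
    fix x assume x: "x \<in> F"
    then have "snd x < n" using Fb by auto
    then have "(row_mark E (snd x), snd x) \<in> E" using row_mark_in[OF Er] by blast
    then have "row_mark E (snd x) < n" using Eb by auto
    then show "f x \<in> F" using col_mark_in[OF Fc] fdef by simp
  qed
  have finj: "inj_on f F"
  proof (rule inj_onI)
    fix x y assume x: "x \<in> F" and y: "y \<in> F" and e: "f x = f y"
    then have a: "row_mark E (snd x) = row_mark E (snd y)" using fdef by (metis fst_conv)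
    have xb: "snd x < n" "fst x < n" and yb: "snd y < n" "fst y < n" using x y Fb by auto
    have "(row_mark E (snd x), snd x) \<in> E" "(row_mark E (snd x), snd y) \<in> E"
      using row_mark_in[OF Er] xb yb a by metis+
    moreover have "row_mark E (snd x) < n" using Eb \<open>(row_mark E (snd x), snd x) \<in> E\<close> by auto
    ultimately have "snd x = snd y" using col_mark_eq[OF Ec] by metis
    moreover have "(fst x, snd x) \<in> F" "(fst y, snd y) \<in> F" using x y by auto
    ultimately have "fst x = fst y" using row_mark_eq[OF Fr] xb by metis
    then show "x = y" using \<open>snd x = snd y\<close> by (simp add: prod_eq_iff)
  qed
  have cardF: "card F = n"
  proof -
    have "bij_betw snd F {0..<n}"
      unfolding bij_betw_def
    proof
      show "inj_on snd F"
      proof (rule inj_onI)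
        fix x y assume x: "x \<in> F" and y: "y \<in> F" and e: "snd x = snd y"
        have "snd x < n" using x Fb by auto
        moreover have "(fst x, snd x) \<in> F" "(fst y, snd x) \<in> F" using x y e by (metis prod.collapse)+
        ultimately have "fst x = fst y" using row_mark_eq[OF Fr] by metis
        then show "x = y" using e by (simp add: prod_eq_iff)
      qed
      show "snd ` F = {0..<n}"
      proof
        show "snd ` F \<subseteq> {0..<n}" using Fb by auto
        show "{0..<n} \<subseteq> snd ` F"
        proof
          fix b assume "b \<in> {0..<n}"
          then have "(row_mark F b, b) \<in> F" using row_mark_in[OF Fr] by auto
          then show "b \<in> snd ` F" by force
        qed
      qed
    qed
    then show ?thesis by (simp add: bij_betw_same_card)
  qed
  have finF: "finite F" using Fb by (rule finite_subset) simp
  define p0 where "p0 = (row_mark F 0, 0::nat)"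
  have p0: "p0 \<in> F" unfolding p0_def using row_mark_in[OF Fr] n0 by blast
  have orb: "\<forall>q\<in>F. \<exists>k. (f^^k) p0 = q" using orb0 p0 by (simp add: f_def)
  note cyc = cycle_lemma[OF finF fS finj p0 orb, unfolded cardF]
  define h where "h k = (f^^k) p0" for k
  have hF: "h k \<in> F" for k by (induction k) (auto simp: h_def p0 fS)
  have hmod: "h k = h (k mod n)" for k unfolding h_def by (rule cyc(1)[rule_format])
  have hfun: "h = (\<lambda>k. (f^^k) p0)" by (simp add: h_def fun_eq_iff)
  have hinj: "inj_on h {0..<n}" using cyc(2) by (simp add: hfun)
  have heq: "h i = h j \<longleftrightarrow> i mod n = j mod n" for i j
  proof
    assume "h i = h j"
    then have "h (i mod n) = h (j mod n)" using hmod[of i] hmod[of j] by metis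
    moreover have "i mod n \<in> {0..<n}" "j mod n \<in> {0..<n}" using n0 by auto
    ultimately show "i mod n = j mod n" using inj_onD[OF hinj] by blast
  next
    assume "i mod n = j mod n"
    then show "h i = h j" using hmod[of i] hmod[of j] by metis
  qed
  define \<alpha> where "\<alpha> k = fst (h k)" for k
  define \<beta> where "\<beta> k = snd (h k)" for k
  have mem1: "(\<alpha> k, \<beta> k) \<in> F" for k using hF by (simp add: \<alpha>_def \<beta>_def)
  have hS: "h (Suc k) = f (h k)" for k by (simp add: h_def)
  have mem2: "(\<alpha> (Suc k), \<beta> k) \<in> E" for k
  proof -
    have "\<beta> k < n" using mem1[of k] Fb by auto
    then show ?thesis using row_mark_in[OF Er] hS fdef by (simp add: \<alpha>_def \<beta>_def)
  qed
  have pa: "pseq n \<alpha>"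
    unfolding pseq_def
  proof (intro conjI allI impI)
    show "\<alpha> k < n" for k using mem1[of k] Fb by auto
    show "(\<alpha> i = \<alpha> j) = (i mod n = j mod n)" for i j
    proof
      assume "\<alpha> i = \<alpha> j"
      moreover have "fst (h i) < n" using hF[of i] Fb by auto
      ultimately have "snd (h i) = snd (h j)"
      proof -
        assume e: "\<alpha> i = \<alpha> j" and lt: "fst (h i) < n"
        have "(fst (h i), snd (h i)) \<in> F" "(fst (h i), snd (h j)) \<in> F"
          using hF[of i] hF[of j] e unfolding \<alpha>_def by (metis prod.collapse)+
        then show ?thesis using col_mark_eq[OF Fc _ lt] by metis
      qed
      then have "h i = h j" using \<open>\<alpha> i = \<alpha> j\<close> unfolding \<alpha>_def by (simp add: prod_eq_iff)
      then show "i mod n = j mod n" using heq by blast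
    next
      assume "i mod n = j mod n"
      then have "h i = h j" using heq by blast
      then show "\<alpha> i = \<alpha> j" by (simp add: \<alpha>_def)
    qed
    show "\<exists>k. \<alpha> k = m" if "m < n" for m
    proof -
      have "(m, col_mark F m) \<in> F" using col_mark_in[OF Fc] that by blast
      then obtain k where "h k = (m, col_mark F m)" using orb unfolding h_def by blast
      then show ?thesis by (metis \<alpha>_def fst_conv)
    qed
  qed
  have pb: "pseq n \<beta>"
    unfolding pseq_def
  proof (intro conjI allI impI)
    show "\<beta> k < n" for k using mem1[of k] Fb by auto
    show "(\<beta> i = \<beta> j) = (i mod n = j mod n)" for i j
    proof
      assume "\<beta> i = \<beta> j"
      moreover have "snd (h i) < n" using hF[of i] Fb by auto
      ultimately have "fst (h i) = fst (h j)"
      proof -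
        assume e: "\<beta> i = \<beta> j" and lt: "snd (h i) < n"
        have "(fst (h i), snd (h i)) \<in> F" "(fst (h j), snd (h i)) \<in> F"
          using hF[of i] hF[of j] e unfolding \<beta>_def by (metis prod.collapse)+
        then show ?thesis using row_mark_eq[OF Fr _ lt] by metis
      qed
      then have "h i = h j" using \<open>\<beta> i = \<beta> j\<close> unfolding \<beta>_def by (simp add: prod_eq_iff)
      then show "i mod n = j mod n" using heq by blast
    next
      assume "i mod n = j mod n"
      then have "h i = h j" using heq by blast
      then show "\<beta> i = \<beta> j" by (simp add: \<beta>_def)
    qed
    show "\<exists>k. \<beta> k = m" if "m < n" for m
    proof -
      have "(row_mark F m, m) \<in> F" using row_mark_in[OF Fr] that by blast
      then obtain k where "h k = (row_mark F m, m)" using orb unfolding h_def by blast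
      then show ?thesis by (metis \<beta>_def snd_conv)
    qed
  qed
  show ?thesis using pa pb mem1 mem2 F_def E_def by blast
qed



lemma card_filter_list:
  "distinct xs \<Longrightarrow> card {x \<in> set xs. P x} = length (filter P xs)"
proof -
  assume d: "distinct xs"
  have "{x \<in> set xs. P x} = set (filter P xs)" by auto
  then show ?thesis using distinct_card[OF distinct_filter[OF d]] by simp
qed

lemma cube_lemma:
  fixes M :: marking and k a1 a2 a3 :: axis and q1 q2 q3 q4 :: point4
  assumes axes: "\<forall>x. x = k \<or> x = a1 \<or> x = a2 \<or> x = a3"
    and dax: "k \<noteq> a1" "k \<noteq> a2" "k \<noteq> a3" "a1 \<noteq> a2" "a1 \<noteq> a3" "a2 \<noteq> a3"
    and dl: "distinct [L1, L2, L3, L4]" and lab: "\<forall>l. l = L1 \<or> l = L2 \<or> l = L3 \<or> l = L4"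
    and q2: "q2 = q1(a1 := v1)" and q3: "q3 = q2(a2 := v2)" and q4: "q4 = q3(a3 := v3)"
    and v: "v1 \<noteq> q1 a1" "v2 \<noteq> q1 a2" "v3 \<noteq> q1 a3"
    and cube: "\<And>l p. (p \<in> M l \<and> p k = m) \<longleftrightarrow> (l, p) \<in> set [(L1,q1),(L2,q2),(L3,q3),(L4,q4)]"
    and bnd: "v1 < n" "q1 a3 < n"
    and vl: "vertex_label_ok L3 k a1" "vertex_label_ok L2 k a3"
  shows "\<forall>l. card {p \<in> M l. p k = m} = 1"
    and "card {(k', m'). k' \<noteq> k \<and> m' < n \<and> card (flat_marks M k m k' m') = 3} = 2"
    and "\<forall>k2 m2. k \<noteq> k2 \<and> m2 < n \<and> card (flat_marks M k m k2 m2) = 3 \<longrightarrow>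
        (\<exists>lv v l1 p1 l2 p2. flat_marks M k m k2 m2 = {(lv, v), (l1, p1), (l2, p2)} \<and>
           right_angle_at v p1 p2 \<and> vertex_label_ok lv k k2)"
proof -
  define xs where "xs = [(L1,q1),(L2,q2),(L3,q3),(L4,q4)]"
  have "distinct (map fst xs)" using dl unfolding xs_def by simp
  then have dxs: "distinct xs" using distinct_map[of fst xs] by blast
  have fm: "flat_marks M k m k' m' = {x \<in> set xs. snd x k' = m'}" for k' m'
  proof (rule set_eqI)
    fix x :: "label \<times> point4"
    obtain l p where x: "x = (l, p)" by (cases x)
    show "x \<in> flat_marks M k m k' m' \<longleftrightarrow> x \<in> {x \<in> set xs. snd x k' = m'}"
      unfolding x flat_marks_def marks_def using cube[of p l] unfolding xs_def[symmetric] by auto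
  qed
  have cfm: "card (flat_marks M k m k' m') = length (filter (\<lambda>x. snd x k' = m') xs)" for k' m'
    unfolding fm by (rule card_filter_list[OF dxs])
  have dax': "a1 \<noteq> k" "a2 \<noteq> k" "a3 \<noteq> k" "a2 \<noteq> a1" "a3 \<noteq> a1" "a3 \<noteq> a2"
    using dax by auto
  have c1: "q2 a1 = v1" "q3 a1 = v1" "q4 a1 = v1"
    and c2: "q2 a2 = q1 a2" "q3 a2 = v2" "q4 a2 = v2"
    and c3: "q2 a3 = q1 a3" "q3 a3 = q1 a3" "q4 a3 = v3"
    using dax dax' unfolding q4 q3 q2 by auto
  show "\<forall>l. card {p \<in> M l. p k = m} = 1"
  proof
    fix l
    have "{p \<in> M l. p k = m} = {p. (l, p) \<in> set xs}"
      using cube[of _ l] unfolding xs_def[symmetric] by auto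
    moreover have "{p. (l, p) \<in> set xs} = {if l = L1 then q1 else if l = L2 then q2 else if l = L3 then q3 else q4}"
      using dl lab[rule_format, of l] unfolding xs_def by auto
    ultimately show "card {p \<in> M l. p k = m} = 1" by simp
  qed
  have key: "k' \<noteq> k \<and> m' < n \<and> card (flat_marks M k m k' m') = 3 \<longleftrightarrow>
      (k' = a1 \<and> m' = v1) \<or> (k' = a3 \<and> m' = q1 a3)" for k' m'
  proof -
    have "k' = k \<or> k' = a1 \<or> k' = a2 \<or> k' = a3" using axes by blast
    then show ?thesis
    proof (elim disjE)
      assume "k' = k" then show ?thesis using dax by auto
    next
      assume e: "k' = a1"
      have "card (flat_marks M k m k' m') = (if q1 a1 = m' then 1 else 0) + (if v1 = m' then 3 else 0)"
        unfolding cfm e xs_def using c1 by simp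
      then show ?thesis using e v(1) bnd dax dax' by auto
    next
      assume e: "k' = a2"
      have "card (flat_marks M k m k' m') = (if q1 a2 = m' then 2 else 0) + (if v2 = m' then 2 else 0)"
        unfolding cfm e xs_def using c2 by simp
      then show ?thesis using e v(2) bnd dax dax' by auto
    next
      assume e: "k' = a3"
      have "card (flat_marks M k m k' m') = (if q1 a3 = m' then 3 else 0) + (if v3 = m' then 1 else 0)"
        unfolding cfm e xs_def using c3 by simp
      then show ?thesis using e v(3) bnd dax dax' by auto
    qed
  qed
  have "{(k', m'). k' \<noteq> k \<and> m' < n \<and> card (flat_marks M k m k' m') = 3} = {(a1, v1), (a3, q1 a3)}"
    using key by auto
  then show "card {(k', m'). k' \<noteq> k \<and> m' < n \<and> card (flat_marks M k m k' m') = 3} = 2"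
    using dax by simp
  show "\<forall>k2 m2. k \<noteq> k2 \<and> m2 < n \<and> card (flat_marks M k m k2 m2) = 3 \<longrightarrow>
        (\<exists>lv v l1 p1 l2 p2. flat_marks M k m k2 m2 = {(lv, v), (l1, p1), (l2, p2)} \<and>
           right_angle_at v p1 p2 \<and> vertex_label_ok lv k k2)"
  proof (intro allI impI)
    fix k2 m2 assume h: "k \<noteq> k2 \<and> m2 < n \<and> card (flat_marks M k m k2 m2) = 3"
    then have "(k2 = a1 \<and> m2 = v1) \<or> (k2 = a3 \<and> m2 = q1 a3)" using key[of k2 m2] by auto
    then show "\<exists>lv v l1 p1 l2 p2. flat_marks M k m k2 m2 = {(lv, v), (l1, p1), (l2, p2)} \<and>
           right_angle_at v p1 p2 \<and> vertex_label_ok lv k k2"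
    proof
      assume e: "k2 = a1 \<and> m2 = v1"
      have "flat_marks M k m k2 m2 = {(L3, q3), (L2, q2), (L4, q4)}"
        unfolding fm xs_def using e c1 v(1) by auto
      moreover have "right_angle_at q3 q2 q4"
        unfolding right_angle_at_def
      proof (intro exI conjI allI impI)
        show "a2 \<noteq> a3" by (rule dax(6))
        show "q2 a2 \<noteq> q3 a2" using c2 v(2) by simp
        show "q2 x = q3 x" if "x \<noteq> a2" for x using that unfolding q3 by simp
        show "q4 a3 \<noteq> q3 a3" using c3 v(3) by simp
        show "q4 x = q3 x" if "x \<noteq> a3" for x using that unfolding q4 by simp
      qed
      ultimately show ?thesis using vl(1) e by blast
    next
      assume e: "k2 = a3 \<and> m2 = q1 a3"
      have "flat_marks M k m k2 m2 = {(L2, q2), (L1, q1), (L3, q3)}"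
        unfolding fm xs_def using e c3 v(3) by auto
      moreover have "right_angle_at q2 q1 q3"
        unfolding right_angle_at_def
      proof (intro exI conjI allI impI)
        show "a1 \<noteq> a2" by (rule dax(4))
        show "q1 a1 \<noteq> q2 a1" using c1 v(1) by simp
        show "q1 x = q2 x" if "x \<noteq> a1" for x using that unfolding q2 by simp
        show "q3 a2 \<noteq> q2 a2" using c2 v(2) by simp
        show "q3 x = q2 x" if "x \<noteq> a2" for x using that unfolding q3 by simp
      qed
      ultimately show ?thesis using vl(2) e by blast
    qed
  qed
qed



definition pt :: "nat \<Rightarrow> nat \<Rightarrow> nat \<Rightarrow> nat \<Rightarrow> point4" where
  "pt w x y z = (\<lambda>k. case k of Aw \<Rightarrow> w | Ax \<Rightarrow> x | Ay \<Rightarrow> y | Az \<Rightarrow> z)"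

lemma pt_simps[simp]: "pt w x y z Aw = w" "pt w x y z Ax = x" "pt w x y z Ay = y" "pt w x y z Az = z"
  by (simp_all add: pt_def)

lemma pt_upd: "(pt w x y z)(Aw := w') = pt w' x y z" "(pt w x y z)(Ax := x') = pt w x' y z"
  "(pt w x y z)(Ay := y') = pt w x y' z" "(pt w x y z)(Az := z') = pt w x y z'"
  by (auto simp: pt_def fun_eq_iff split: axis.split)

definition mkM :: "(nat \<Rightarrow> nat) \<Rightarrow> (nat \<Rightarrow> nat) \<Rightarrow> (nat \<Rightarrow> nat) \<Rightarrow> (nat \<Rightarrow> nat) \<Rightarrow> marking" where
  "mkM \<alpha> \<xi> \<beta> \<zeta> = (\<lambda>l. case l of
      LW \<Rightarrow> range (\<lambda>j. pt (\<alpha> j) (\<xi> j) (\<beta> j) (\<zeta> j))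
    | LX \<Rightarrow> range (\<lambda>j. pt (\<alpha> (Suc j)) (\<xi> j) (\<beta> j) (\<zeta> j))
    | LY \<Rightarrow> range (\<lambda>j. pt (\<alpha> (Suc j)) (\<xi> (Suc j)) (\<beta> j) (\<zeta> j))
    | LZ \<Rightarrow> range (\<lambda>j. pt (\<alpha> (Suc j)) (\<xi> (Suc j)) (\<beta> (Suc j)) (\<zeta> j)))"

lemma axes_all: "\<forall>x::axis. x = Aw \<or> x = Ax \<or> x = Ay \<or> x = Az"
  by (metis axis.exhaust)

lemma labels_all: "\<forall>x::label. x = LW \<or> x = LX \<or> x = LY \<or> x = LZ"
  by (metis label.exhaust)

lemma pseq_eq: "pseq n s \<Longrightarrow> s a = s b \<Longrightarrow> a mod n = b mod n"
  using pseqD(2) by blast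

lemma pseq_eq2: "pseq n s \<Longrightarrow> a mod n = b mod n \<Longrightarrow> s a = s b"
  using pseqD(2) by blast

definition CG :: "nat \<Rightarrow> marking \<Rightarrow> axis \<Rightarrow> nat \<Rightarrow> bool" where
  "CG n M k m \<longleftrightarrow> (\<forall>l. card {p \<in> M l. p k = m} = 1) \<and>
    card {(k', m'). k' \<noteq> k \<and> m' < n \<and> card (flat_marks M k m k' m') = 3} = 2 \<and>
    (\<forall>k2 m2. k \<noteq> k2 \<and> m2 < n \<and> card (flat_marks M k m k2 m2) = 3 \<longrightarrow>
        (\<exists>lv v l1 p1 l2 p2. flat_marks M k m k2 m2 = {(lv, v), (l1, p1), (l2, p2)} \<and>
           right_angle_at v p1 p2 \<and> vertex_label_ok lv k k2))"

lemma cube_CG: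
  fixes M :: marking and k axa axb axc :: axis and qa qb qc qd :: point4
  assumes axes: "\<forall>x. x = k \<or> x = axa \<or> x = axb \<or> x = axc"
    and dax: "k \<noteq> axa" "k \<noteq> axb" "k \<noteq> axc" "axa \<noteq> axb" "axa \<noteq> axc" "axb \<noteq> axc"
    and dl: "distinct [La, Lb, Lc, Ld]" and lab: "\<forall>l. l = La \<or> l = Lb \<or> l = Lc \<or> l = Ld"
    and qb: "qb = qa(axa := va)" and qc: "qc = qb(axb := vb)" and qd: "qd = qc(axc := vc)"
    and v: "va \<noteq> qa axa" "vb \<noteq> qa axb" "vc \<noteq> qa axc"
    and cube: "\<And>l p. (p \<in> M l \<and> p k = m) \<longleftrightarrow> (l, p) \<in> set [(La,qa),(Lb,qb),(Lc,qc),(Ld,qd)]"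
    and bnd: "va < n" "qa axc < n"
    and vl: "vertex_label_ok Lc k axa" "vertex_label_ok Lb k axc"
  shows "CG n M k m"
  unfolding CG_def using cube_lemma[OF assms] by blast

lemma vlo: "vertex_label_ok LZ Aw Ax" "vertex_label_ok LY Aw Az"
  "vertex_label_ok LW Ax Ay" "vertex_label_ok LZ Ax Aw"
  "vertex_label_ok LX Ay Az" "vertex_label_ok LW Ay Ax"
  "vertex_label_ok LY Az Aw" "vertex_label_ok LX Az Ay"
  by (auto simp: vertex_label_ok_def doubleton_eq_iff)

lemma construction:
  assumes n0: "0 < n" and pa: "pseq n \<alpha>" and px: "pseq n \<xi>" and pb: "pseq n \<beta>" and pz: "pseq n \<zeta>"
    and da: "\<And>j. \<alpha> (Suc j) \<noteq> \<alpha> j" and dx: "\<And>j. \<xi> (Suc j) \<noteq> \<xi> j"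
    and db: "\<And>j. \<beta> (Suc j) \<noteq> \<beta> j" and dz: "\<And>j. \<zeta> (Suc j) \<noteq> \<zeta> j"
  shows "marking_conditions n (mkM \<alpha> \<xi> \<beta> \<zeta>) \<and> joinable (mkM \<alpha> \<xi> \<beta> \<zeta>)"
proof -
  define M where "M = mkM \<alpha> \<xi> \<beta> \<zeta>"
  define W where "W j = pt (\<alpha> j) (\<xi> j) (\<beta> j) (\<zeta> j)" for j
  define X where "X j = pt (\<alpha> (Suc j)) (\<xi> j) (\<beta> j) (\<zeta> j)" for j
  define Y where "Y j = pt (\<alpha> (Suc j)) (\<xi> (Suc j)) (\<beta> j) (\<zeta> j)" for j
  define Z where "Z j = pt (\<alpha> (Suc j)) (\<xi> (Suc j)) (\<beta> (Suc j)) (\<zeta> j)" for j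
  have MW: "M LW = range W" and MX: "M LX = range X" and MY: "M LY = range Y" and MZ: "M LZ = range Z"
    unfolding M_def mkM_def W_def X_def Y_def Z_def by simp_all
  have sucm: "Suc a mod n = Suc b mod n \<Longrightarrow> a mod n = b mod n" for a b using mod_Suc_iff[OF n0] by blast
  have sucm2: "a mod n = b mod n \<Longrightarrow> Suc a mod n = Suc b mod n" for a b using mod_Suc_iff[OF n0] by blast
  have eqW: "a mod n = b mod n \<Longrightarrow> W a = W b" for a b
    unfolding W_def using pseq_eq2[OF pa] pseq_eq2[OF px] pseq_eq2[OF pb] pseq_eq2[OF pz] by metis
  have eqX: "a mod n = b mod n \<Longrightarrow> X a = X b" for a b
    unfolding X_def using pseq_eq2[OF pa] pseq_eq2[OF px] pseq_eq2[OF pb] pseq_eq2[OF pz] sucm2 by metis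
  have eqY: "a mod n = b mod n \<Longrightarrow> Y a = Y b" for a b
    unfolding Y_def using pseq_eq2[OF pa] pseq_eq2[OF px] pseq_eq2[OF pb] pseq_eq2[OF pz] sucm2 by metis
  have eqZ: "a mod n = b mod n \<Longrightarrow> Z a = Z b" for a b
    unfolding Z_def using pseq_eq2[OF pa] pseq_eq2[OF px] pseq_eq2[OF pb] pseq_eq2[OF pz] sucm2 by metis
  have bnds: "\<alpha> a < n" "\<xi> a < n" "\<beta> a < n" "\<zeta> a < n" for a
    using pseqD(1)[OF pa] pseqD(1)[OF px] pseqD(1)[OF pb] pseqD(1)[OF pz] by auto
  have lW: "distinct [LW, LX, LY, LZ]" by simp
  have CGall: "CG n M k m" if mn: "m < n" for k m
  proof -
    have "k = Aw \<or> k = Ax \<or> k = Ay \<or> k = Az" using axes_all by blast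
    then show ?thesis
    proof (elim disjE)
      assume k: "k = Aw"
      obtain j where j: "\<alpha> (Suc j) = m" using pseqD(3)[OF pseq_shift[OF pa n0] mn] by blast
      have cube: "(p \<in> M l \<and> p k = m) \<longleftrightarrow> (l, p) \<in> set [(LX, X j), (LY, Y j), (LZ, Z j), (LW, W (Suc j))]" for l p
      proof -
        have "l = LW \<or> l = LX \<or> l = LY \<or> l = LZ" using labels_all by blast
        then show ?thesis
        proof (elim disjE)
          assume l: "l = LW"
          have "p \<in> range W \<and> p Aw = m \<longleftrightarrow> p = W (Suc j)"
          proof
            assume "p \<in> range W \<and> p Aw = m"
            then obtain i where "p = W i" "\<alpha> i = \<alpha> (Suc j)" using j by (auto simp: W_def)
            then show "p = W (Suc j)" using eqW pseq_eq[OF pa] by metis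
          next
            assume "p = W (Suc j)"
            moreover have "W (Suc j) \<in> range W" by blast
            moreover have "W (Suc j) Aw = m" using j by (simp add: W_def)
            ultimately show "p \<in> range W \<and> p Aw = m" by simp
          qed
          then show ?thesis using l k MW by simp
        next
          assume l: "l = LX"
          have "p \<in> range X \<and> p Aw = m \<longleftrightarrow> p = X j"
          proof
            assume "p \<in> range X \<and> p Aw = m"
            then obtain i where "p = X i" "\<alpha> (Suc i) = \<alpha> (Suc j)" using j by (auto simp: X_def)
            then show "p = X j" using eqX pseq_eq[OF pa] sucm by metis
          next
            assume "p = X j"
            moreover have "X j \<in> range X" by blast
            moreover have "X j Aw = m" using j by (simp add: X_def)
            ultimately show "p \<in> range X \<and> p Aw = m" by simp
          qed
          then show ?thesis using l k MX by simp
        next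
          assume l: "l = LY"
          have "p \<in> range Y \<and> p Aw = m \<longleftrightarrow> p = Y j"
          proof
            assume "p \<in> range Y \<and> p Aw = m"
            then obtain i where "p = Y i" "\<alpha> (Suc i) = \<alpha> (Suc j)" using j by (auto simp: Y_def)
            then show "p = Y j" using eqY pseq_eq[OF pa] sucm by metis
          next
            assume "p = Y j"
            moreover have "Y j \<in> range Y" by blast
            moreover have "Y j Aw = m" using j by (simp add: Y_def)
            ultimately show "p \<in> range Y \<and> p Aw = m" by simp
          qed
          then show ?thesis using l k MY by simp
        next
          assume l: "l = LZ"
          have "p \<in> range Z \<and> p Aw = m \<longleftrightarrow> p = Z j"
          proof
            assume "p \<in> range Z \<and> p Aw = m"
            then obtain i where "p = Z i" "\<alpha> (Suc i) = \<alpha> (Suc j)" using j by (auto simp: Z_def)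
            then show "p = Z j" using eqZ pseq_eq[OF pa] sucm by metis
          next
            assume "p = Z j"
            moreover have "Z j \<in> range Z" by blast
            moreover have "Z j Aw = m" using j by (simp add: Z_def)
            ultimately show "p \<in> range Z \<and> p Aw = m" by simp
          qed
          then show ?thesis using l k MZ by simp
        qed
      qed
      show ?thesis unfolding k
        by (rule cube_CG[where axa=Ax and axb=Ay and axc=Az and qa="X j" and qb="Y j" and qc="Z j" and qd="W (Suc j)"
              and va="\<xi> (Suc j)" and vb="\<beta> (Suc j)" and vc="\<zeta> (Suc j)"])
           (use cube[unfolded k] da dx db dz bnds vlo labels_all axes_all in \<open>auto simp: X_def Y_def Z_def W_def pt_upd\<close>)
    next
      assume k: "k = Ax"
      obtain j where j: "\<xi> (Suc j) = m" using pseqD(3)[OF pseq_shift[OF px n0] mn] by blast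
      have cube: "(p \<in> M l \<and> p k = m) \<longleftrightarrow> (l, p) \<in> set [(LY, Y j), (LZ, Z j), (LW, W (Suc j)), (LX, X (Suc j))]" for l p
      proof -
        have "l = LW \<or> l = LX \<or> l = LY \<or> l = LZ" using labels_all by blast
        then show ?thesis
        proof (elim disjE)
          assume l: "l = LW"
          have "p \<in> range W \<and> p Ax = m \<longleftrightarrow> p = W (Suc j)"
          proof
            assume "p \<in> range W \<and> p Ax = m"
            then obtain i where "p = W i" "\<xi> i = m" by (auto simp: W_def)
            then show "p = W (Suc j)" using j eqW pseq_eq[OF px] sucm by metis
          next
            assume "p = W (Suc j)"
            moreover have "W (Suc j) \<in> range W" by blast
            moreover have "W (Suc j) Ax = m" using j by (simp add: W_def)
            ultimately show "p \<in> range W \<and> p Ax = m" by simp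
          qed
          then show ?thesis using l k MW by simp
        next
          assume l: "l = LX"
          have "p \<in> range X \<and> p Ax = m \<longleftrightarrow> p = X (Suc j)"
          proof
            assume "p \<in> range X \<and> p Ax = m"
            then obtain i where "p = X i" "\<xi> i = m" by (auto simp: X_def)
            then show "p = X (Suc j)" using j eqX pseq_eq[OF px] sucm by metis
          next
            assume "p = X (Suc j)"
            moreover have "X (Suc j) \<in> range X" by blast
            moreover have "X (Suc j) Ax = m" using j by (simp add: X_def)
            ultimately show "p \<in> range X \<and> p Ax = m" by simp
          qed
          then show ?thesis using l k MX by simp
        next
          assume l: "l = LY"
          have "p \<in> range Y \<and> p Ax = m \<longleftrightarrow> p = Y j"
          proof
            assume "p \<in> range Y \<and> p Ax = m"
            then obtain i where "p = Y i" "\<xi> (Suc i) = m" by (auto simp: Y_def)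
            then show "p = Y j" using j eqY pseq_eq[OF px] sucm by metis
          next
            assume "p = Y j"
            moreover have "Y j \<in> range Y" by blast
            moreover have "Y j Ax = m" using j by (simp add: Y_def)
            ultimately show "p \<in> range Y \<and> p Ax = m" by simp
          qed
          then show ?thesis using l k MY by simp
        next
          assume l: "l = LZ"
          have "p \<in> range Z \<and> p Ax = m \<longleftrightarrow> p = Z j"
          proof
            assume "p \<in> range Z \<and> p Ax = m"
            then obtain i where "p = Z i" "\<xi> (Suc i) = m" by (auto simp: Z_def)
            then show "p = Z j" using j eqZ pseq_eq[OF px] sucm by metis
          next
            assume "p = Z j"
            moreover have "Z j \<in> range Z" by blast
            moreover have "Z j Ax = m" using j by (simp add: Z_def)
            ultimately show "p \<in> range Z \<and> p Ax = m" by simp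
          qed
          then show ?thesis using l k MZ by simp
        qed
      qed
      show ?thesis unfolding k
        by (rule cube_CG[where axa=Ay and axb=Az and axc=Aw and qa="Y j" and qb="Z j" and qc="W (Suc j)" and qd="X (Suc j)"
              and va="\<beta> (Suc j)" and vb="\<zeta> (Suc j)" and vc="\<alpha> (Suc (Suc j))"])
           (use cube[unfolded k] da dx db dz bnds vlo labels_all axes_all in \<open>auto simp: X_def Y_def Z_def W_def pt_upd\<close>)
    next
      assume k: "k = Ay"
      obtain j where j: "\<beta> (Suc j) = m" using pseqD(3)[OF pseq_shift[OF pb n0] mn] by blast
      have cube: "(p \<in> M l \<and> p k = m) \<longleftrightarrow> (l, p) \<in> set [(LZ, Z j), (LW, W (Suc j)), (LX, X (Suc j)), (LY, Y (Suc j))]" for l p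
      proof -
        have "l = LW \<or> l = LX \<or> l = LY \<or> l = LZ" using labels_all by blast
        then show ?thesis
        proof (elim disjE)
          assume l: "l = LW"
          have "p \<in> range W \<and> p Ay = m \<longleftrightarrow> p = W (Suc j)"
          proof
            assume "p \<in> range W \<and> p Ay = m"
            then obtain i where "p = W i" "\<beta> i = m" by (auto simp: W_def)
            then show "p = W (Suc j)" using j eqW pseq_eq[OF pb] sucm by metis
          next
            assume "p = W (Suc j)"
            moreover have "W (Suc j) \<in> range W" by blast
            moreover have "W (Suc j) Ay = m" using j by (simp add: W_def)
            ultimately show "p \<in> range W \<and> p Ay = m" by simp
          qed
          then show ?thesis using l k MW by simp
        next
          assume l: "l = LX"
          have "p \<in> range X \<and> p Ay = m \<longleftrightarrow> p = X (Suc j)"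
          proof
            assume "p \<in> range X \<and> p Ay = m"
            then obtain i where "p = X i" "\<beta> i = m" by (auto simp: X_def)
            then show "p = X (Suc j)" using j eqX pseq_eq[OF pb] sucm by metis
          next
            assume "p = X (Suc j)"
            moreover have "X (Suc j) \<in> range X" by blast
            moreover have "X (Suc j) Ay = m" using j by (simp add: X_def)
            ultimately show "p \<in> range X \<and> p Ay = m" by simp
          qed
          then show ?thesis using l k MX by simp
        next
          assume l: "l = LY"
          have "p \<in> range Y \<and> p Ay = m \<longleftrightarrow> p = Y (Suc j)"
          proof
            assume "p \<in> range Y \<and> p Ay = m"
            then obtain i where "p = Y i" "\<beta> i = m" by (auto simp: Y_def)
            then show "p = Y (Suc j)" using j eqY pseq_eq[OF pb] sucm by metis
          next
            assume "p = Y (Suc j)"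
            moreover have "Y (Suc j) \<in> range Y" by blast
            moreover have "Y (Suc j) Ay = m" using j by (simp add: Y_def)
            ultimately show "p \<in> range Y \<and> p Ay = m" by simp
          qed
          then show ?thesis using l k MY by simp
        next
          assume l: "l = LZ"
          have "p \<in> range Z \<and> p Ay = m \<longleftrightarrow> p = Z j"
          proof
            assume "p \<in> range Z \<and> p Ay = m"
            then obtain i where "p = Z i" "\<beta> (Suc i) = m" by (auto simp: Z_def)
            then show "p = Z j" using j eqZ pseq_eq[OF pb] sucm by metis
          next
            assume "p = Z j"
            moreover have "Z j \<in> range Z" by blast
            moreover have "Z j Ay = m" using j by (simp add: Z_def)
            ultimately show "p \<in> range Z \<and> p Ay = m" by simp
          qed
          then show ?thesis using l k MZ by simp
        qed
      qed
      show ?thesis unfolding k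
        by (rule cube_CG[where axa=Az and axb=Aw and axc=Ax and qa="Z j" and qb="W (Suc j)" and qc="X (Suc j)" and qd="Y (Suc j)"
              and va="\<zeta> (Suc j)" and vb="\<alpha> (Suc (Suc j))" and vc="\<xi> (Suc (Suc j))"])
           (use cube[unfolded k] da dx db dz bnds vlo labels_all axes_all in \<open>auto simp: X_def Y_def Z_def W_def pt_upd\<close>)
    next
      assume k: "k = Az"
      obtain j where j: "\<zeta> j = m" using pseqD(3)[OF pz mn] by blast
      have cube: "(p \<in> M l \<and> p k = m) \<longleftrightarrow> (l, p) \<in> set [(LW, W j), (LX, X j), (LY, Y j), (LZ, Z j)]" for l p
      proof -
        have "l = LW \<or> l = LX \<or> l = LY \<or> l = LZ" using labels_all by blast
        then show ?thesis
        proof (elim disjE)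
          assume l: "l = LW"
          have "p \<in> range W \<and> p Az = m \<longleftrightarrow> p = W j"
          proof
            assume "p \<in> range W \<and> p Az = m"
            then obtain i where "p = W i" "\<zeta> i = m" by (auto simp: W_def)
            then show "p = W j" using j eqW pseq_eq[OF pz] sucm by metis
          next
            assume "p = W j"
            moreover have "W j \<in> range W" by blast
            moreover have "W j Az = m" using j by (simp add: W_def)
            ultimately show "p \<in> range W \<and> p Az = m" by simp
          qed
          then show ?thesis using l k MW by simp
        next
          assume l: "l = LX"
          have "p \<in> range X \<and> p Az = m \<longleftrightarrow> p = X j"
          proof
            assume "p \<in> range X \<and> p Az = m"
            then obtain i where "p = X i" "\<zeta> i = m" by (auto simp: X_def)
            then show "p = X j" using j eqX pseq_eq[OF pz] sucm by metis
          next
            assume "p = X j"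
            moreover have "X j \<in> range X" by blast
            moreover have "X j Az = m" using j by (simp add: X_def)
            ultimately show "p \<in> range X \<and> p Az = m" by simp
          qed
          then show ?thesis using l k MX by simp
        next
          assume l: "l = LY"
          have "p \<in> range Y \<and> p Az = m \<longleftrightarrow> p = Y j"
          proof
            assume "p \<in> range Y \<and> p Az = m"
            then obtain i where "p = Y i" "\<zeta> i = m" by (auto simp: Y_def)
            then show "p = Y j" using j eqY pseq_eq[OF pz] sucm by metis
          next
            assume "p = Y j"
            moreover have "Y j \<in> range Y" by blast
            moreover have "Y j Az = m" using j by (simp add: Y_def)
            ultimately show "p \<in> range Y \<and> p Az = m" by simp
          qed
          then show ?thesis using l k MY by simp
        next
          assume l: "l = LZ"
          have "p \<in> range Z \<and> p Az = m \<longleftrightarrow> p = Z j"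
          proof
            assume "p \<in> range Z \<and> p Az = m"
            then obtain i where "p = Z i" "\<zeta> i = m" by (auto simp: Z_def)
            then show "p = Z j" using j eqZ pseq_eq[OF pz] sucm by metis
          next
            assume "p = Z j"
            moreover have "Z j \<in> range Z" by blast
            moreover have "Z j Az = m" using j by (simp add: Z_def)
            ultimately show "p \<in> range Z \<and> p Az = m" by simp
          qed
          then show ?thesis using l k MZ by simp
        qed
      qed
      show ?thesis unfolding k
        by (rule cube_CG[where axa=Aw and axb=Ax and axc=Ay and qa="W j" and qb="X j" and qc="Y j" and qd="Z j"
              and va="\<alpha> (Suc j)" and vb="\<xi> (Suc j)" and vc="\<beta> (Suc j)"])
           (use cube[unfolded k] da dx db dz bnds vlo labels_all axes_all in \<open>auto simp: X_def Y_def Z_def W_def pt_upd\<close>)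
    qed
  qed
  have mc: "marking_conditions n M"
    unfolding marking_conditions_def
  proof (intro conjI)
    show "\<forall>l. \<forall>p\<in>M l. \<forall>k. p k < n"
    proof (intro allI ballI)
      fix l p k assume p: "p \<in> M l"
      have "l = LW \<or> l = LX \<or> l = LY \<or> l = LZ" using labels_all by blast
      then show "p k < n"
      proof (elim disjE)
        assume "l = LW" then obtain i where "p = W i" using p MW by auto
        then show ?thesis by (cases k) (simp_all add: W_def bnds)
      next
        assume "l = LX" then obtain i where "p = X i" using p MX by auto
        then show ?thesis by (cases k) (simp_all add: X_def bnds)
      next
        assume "l = LY" then obtain i where "p = Y i" using p MY by auto
        then show ?thesis by (cases k) (simp_all add: Y_def bnds)
      next
        assume "l = LZ" then obtain i where "p = Z i" using p MZ by auto
        then show ?thesis by (cases k) (simp_all add: Z_def bnds)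
      qed
    qed
    show "\<forall>k. \<forall>m<n. \<forall>l. card {p \<in> M l. p k = m} = 1"
      using CGall unfolding CG_def by blast
    show "\<forall>k. \<forall>m<n. card {(k', m'). k' \<noteq> k \<and> m' < n \<and> card (flat_marks M k m k' m') = 3} = 2"
      using CGall unfolding CG_def by blast
    show "\<forall>k1 k2 m1 m2. k1 \<noteq> k2 \<and> m1 < n \<and> m2 < n \<and> card (flat_marks M k1 m1 k2 m2) = 3 \<longrightarrow>
        (\<exists>lv v l1 p1 l2 p2. flat_marks M k1 m1 k2 m2 = {(lv, v), (l1, p1), (l2, p2)} \<and>
           right_angle_at v p1 p2 \<and> vertex_label_ok lv k1 k2)"
    proof (intro allI impI)
      fix k1 k2 m1 m2
      assume h: "k1 \<noteq> k2 \<and> m1 < n \<and> m2 < n \<and> card (flat_marks M k1 m1 k2 m2) = 3"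
      then have "CG n M k1 m1" using CGall by blast
      then show "\<exists>lv v l1 p1 l2 p2. flat_marks M k1 m1 k2 m2 = {(lv, v), (l1, p1), (l2, p2)} \<and>
           right_angle_at v p1 p2 \<and> vertex_label_ok lv k1 k2"
        using h unfolding CG_def by blast
    qed
  qed
  have jn: "joinable M"
    unfolding joinable_def
  proof (intro conjI ballI)
    fix p assume "p \<in> M LW"
    then obtain i where p: "p = W i" using MW by auto
    have "\<forall>k. k \<noteq> Aw \<longrightarrow> X i k = p k" unfolding p by (simp add: X_def W_def pt_def split: axis.split)
    then show "\<exists>q\<in>M LX. \<forall>k. k \<noteq> Aw \<longrightarrow> q k = p k" using MX by blast
  next
    fix p assume "p \<in> M LX"
    then obtain i where p: "p = X i" using MX by auto
    have "\<forall>k. k \<noteq> Ax \<longrightarrow> Y i k = p k" unfolding p by (simp add: X_def Y_def pt_def split: axis.split)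
    then show "\<exists>q\<in>M LY. \<forall>k. k \<noteq> Ax \<longrightarrow> q k = p k" using MY by blast
  next
    fix p assume "p \<in> M LY"
    then obtain i where p: "p = Y i" using MY by auto
    have "\<forall>k. k \<noteq> Ay \<longrightarrow> Z i k = p k" unfolding p by (simp add: Z_def Y_def pt_def split: axis.split)
    then show "\<exists>q\<in>M LZ. \<forall>k. k \<noteq> Ay \<longrightarrow> q k = p k" using MZ by blast
  next
    fix p assume "p \<in> M LZ"
    then obtain i where p: "p = Z i" using MZ by auto
    have "\<forall>k. k \<noteq> Az \<longrightarrow> W (Suc i) k = p k" unfolding p by (simp add: Z_def W_def pt_def split: axis.split)
    then show "\<exists>q\<in>M LW. \<forall>k. k \<noteq> Az \<longrightarrow> q k = p k" using MW by blast
  qed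
  show ?thesis using mc jn unfolding M_def by blast
qed



lemma gd_parts:
  assumes "grid_diagram n G"
  shows "fst G \<subseteq> {0..<n} \<times> {0..<n}" "snd G \<subseteq> {0..<n} \<times> {0..<n}"
    "\<forall>b<n. \<exists>!a. (a, b) \<in> fst G" "\<forall>b<n. \<exists>!a. (a, b) \<in> snd G"
    "\<forall>a<n. \<exists>!b. (a, b) \<in> fst G" "\<forall>a<n. \<exists>!b. (a, b) \<in> snd G"
proof -
  have g: "fst G \<subseteq> {0..<n} \<times> {0..<n} \<and> snd G \<subseteq> {0..<n} \<times> {0..<n} \<and>
     (\<forall>b<n. \<exists>!a. (a, b) \<in> fst G) \<and> (\<forall>b<n. \<exists>!a. (a, b) \<in> snd G) \<and>
     (\<forall>a<n. \<exists>!b. (a, b) \<in> fst G) \<and> (\<forall>a<n. \<exists>!b. (a, b) \<in> snd G)"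
    using assms unfolding grid_diagram_def by assumption
  show "fst G \<subseteq> {0..<n} \<times> {0..<n}" using conjunct1[OF g] .
  show "snd G \<subseteq> {0..<n} \<times> {0..<n}" using conjunct1[OF conjunct2[OF g]] .
  show "\<forall>b<n. \<exists>!a. (a, b) \<in> fst G" using conjunct1[OF conjunct2[OF conjunct2[OF g]]] .
  show "\<forall>b<n. \<exists>!a. (a, b) \<in> snd G" using conjunct1[OF conjunct2[OF conjunct2[OF conjunct2[OF g]]]] .
  show "\<forall>a<n. \<exists>!b. (a, b) \<in> fst G" using conjunct1[OF conjunct2[OF conjunct2[OF conjunct2[OF conjunct2[OF g]]]]] .
  show "\<forall>a<n. \<exists>!b. (a, b) \<in> snd G" using conjunct2[OF conjunct2[OF conjunct2[OF conjunct2[OF conjunct2[OF g]]]]] .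
qed

lemma proj_lemma:
  assumes gd: "grid_diagram n G" and pa: "pseq n \<alpha>" and pb: "pseq n \<beta>"
    and m1: "\<And>k. (\<alpha> k, \<beta> k) \<in> fst G" and m2: "\<And>k. (\<alpha> (Suc k), \<beta> k) \<in> snd G"
  shows "range (\<lambda>k. (\<alpha> k, \<beta> k)) = fst G" "range (\<lambda>k. (\<alpha> (Suc k), \<beta> k)) = snd G"
proof -
  note g = gd_parts[OF gd]
  show "range (\<lambda>k. (\<alpha> k, \<beta> k)) = fst G"
  proof
    show "range (\<lambda>k. (\<alpha> k, \<beta> k)) \<subseteq> fst G" using m1 by auto
    show "fst G \<subseteq> range (\<lambda>k. (\<alpha> k, \<beta> k))"
    proof
      fix x assume x: "x \<in> fst G"
      obtain a b where ab: "x = (a, b)" by (cases x)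
      have an: "a < n" using x ab g(1) by auto
      obtain k where k: "\<alpha> k = a" using pseqD(3)[OF pa an] by blast
      have "(a, b) \<in> fst G" "(a, \<beta> k) \<in> fst G" using x ab m1[of k] k by auto
      then have "b = \<beta> k" using col_mark_eq[OF g(5) _ an] by metis
      then show "x \<in> range (\<lambda>k. (\<alpha> k, \<beta> k))" using ab k by auto
    qed
  qed
  show "range (\<lambda>k. (\<alpha> (Suc k), \<beta> k)) = snd G"
  proof
    show "range (\<lambda>k. (\<alpha> (Suc k), \<beta> k)) \<subseteq> snd G" using m2 by auto
    show "snd G \<subseteq> range (\<lambda>k. (\<alpha> (Suc k), \<beta> k))"
    proof
      fix x assume x: "x \<in> snd G"
      obtain a b where ab: "x = (a, b)" by (cases x)
      have bn: "b < n" using x ab g(2) by auto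
      obtain k where k: "\<beta> k = b" using pseqD(3)[OF pb bn] by blast
      have "(a, b) \<in> snd G" "(\<alpha> (Suc k), b) \<in> snd G" using x ab m2[of k] k by auto
      then have "a = \<alpha> (Suc k)" using row_mark_eq[OF g(4) _ bn] by metis
      then show "x \<in> range (\<lambda>k. (\<alpha> (Suc k), \<beta> k))" using ab k by auto
    qed
  qed
qed

lemma diseq_lemma:
  assumes dj: "fst G \<inter> snd G = {}"
    and m1: "\<And>k. (\<alpha> k, \<beta> k) \<in> fst G" and m2: "\<And>k. (\<alpha> (Suc k), \<beta> k) \<in> snd G"
  shows "\<alpha> (Suc j) \<noteq> \<alpha> j" "\<beta> (Suc j) \<noteq> \<beta> j"
proof
  assume "\<alpha> (Suc j) = \<alpha> j"
  then have "(\<alpha> j, \<beta> j) \<in> fst G \<inter> snd G" using m1[of j] m2[of j] by auto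
  then show False using dj by blast
next
  show "\<beta> (Suc j) \<noteq> \<beta> j"
  proof
    assume "\<beta> (Suc j) = \<beta> j"
    then have "(\<alpha> (Suc j), \<beta> j) \<in> fst G \<inter> snd G" using m1[of "Suc j"] m2[of j] by auto
    then show False using dj by blast
  qed
qed

lemma imm_parts:
  assumes "lagrangian_grid n G"
  shows "immersed_grid_diagram n G" "grid_diagram n G" "0 < n" "fst G \<inter> snd G = {}"
  using assms unfolding lagrangian_grid_def immersed_grid_diagram_def by blast+

theorem theorem8p4:
  fixes n :: nat and Gwy Gzx :: grid
  assumes "lagrangian_grid n Gwy"
    and "lagrangian_grid n Gzx"
    and "\<forall>d\<in>crossing_actions n Gwy. \<forall>d'\<in>crossing_actions n Gzx. d \<noteq> d'"
  shows "\<exists>M. lagrangian_hypercube n M \<and> proj_wy M = Gwy \<and> proj_zx M = Gzx"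
proof -
  note i1 = imm_parts[OF assms(1)] and i2 = imm_parts[OF assms(2)]
  obtain \<alpha> \<beta> where pa: "pseq n \<alpha>" and pb: "pseq n \<beta>"
    and a1: "\<And>k. (\<alpha> k, \<beta> k) \<in> fst Gwy" and a2: "\<And>k. (\<alpha> (Suc k), \<beta> k) \<in> snd Gwy"
    using grid_seqs[OF i1(1)] by blast
  obtain \<alpha>' \<beta>' where pa': "pseq n \<alpha>'" and pb': "pseq n \<beta>'"
    and b1: "\<And>k. (\<alpha>' k, \<beta>' k) \<in> fst Gzx" and b2: "\<And>k. (\<alpha>' (Suc k), \<beta>' k) \<in> snd Gzx"
    using grid_seqs[OF i2(1)] by blast
  have n0: "0 < n" by (rule i1(3))
  define \<xi> where "\<xi> = \<beta>'"
  define \<zeta> where "\<zeta> k = \<alpha>' (Suc k)" for k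
  have pz: "pseq n \<zeta>" unfolding \<zeta>_def by (rule pseq_shift[OF pa' n0])
  have pbs: "pseq n (\<lambda>k. \<beta>' (Suc k))" by (rule pseq_shift[OF pb' n0])
  have px: "pseq n \<xi>" unfolding \<xi>_def by (rule pb')
  have da: "\<And>j. \<alpha> (Suc j) \<noteq> \<alpha> j" and db: "\<And>j. \<beta> (Suc j) \<noteq> \<beta> j"
    using diseq_lemma[of Gwy \<alpha> \<beta>, OF i1(4) a1 a2] by auto
  have dx: "\<And>j. \<xi> (Suc j) \<noteq> \<xi> j" unfolding \<xi>_def using diseq_lemma[of Gzx \<alpha>' \<beta>', OF i2(4) b1 b2] by auto
  have dz: "\<And>j. \<zeta> (Suc j) \<noteq> \<zeta> j" unfolding \<zeta>_def using diseq_lemma[of Gzx \<alpha>' \<beta>', OF i2(4) b1 b2] by auto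
  define M where "M = mkM \<alpha> \<xi> \<beta> \<zeta>"
  have mj: "marking_conditions n M \<and> joinable M"
    unfolding M_def using construction[of n \<alpha> \<xi> \<beta> \<zeta>] n0 pa px pb pz da dx db dz by blast
  have pw: "proj_wy M = Gwy"
  proof -
    have "fst (proj_wy M) = range (\<lambda>k. (\<alpha> k, \<beta> k))"
      unfolding proj_wy_def M_def mkM_def by (simp add: image_image)
    moreover have "snd (proj_wy M) = range (\<lambda>k. (\<alpha> (Suc k), \<beta> k))"
      unfolding proj_wy_def M_def mkM_def by (simp add: image_image)
    ultimately show ?thesis using proj_lemma[of n Gwy \<alpha> \<beta>, OF i1(2) pa pb a1 a2] by (simp add: prod_eq_iff)
  qed
  have pzx: "proj_zx M = Gzx"
  proof -
    have "fst (proj_zx M) = range (\<lambda>k. (\<alpha>' (Suc k), \<beta>' (Suc k)))"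
      unfolding proj_zx_def M_def mkM_def \<xi>_def \<zeta>_def by (simp add: image_image)
    moreover have "snd (proj_zx M) = range (\<lambda>k. (\<alpha>' (Suc k), \<beta>' k))"
      unfolding proj_zx_def M_def mkM_def \<xi>_def \<zeta>_def by (simp add: image_image)
    moreover have "range (\<lambda>k. (\<alpha>' (Suc k), \<beta>' (Suc k))) = fst Gzx"
      using proj_lemma(1)[of n Gzx "\<lambda>k. \<alpha>' (Suc k)" "\<lambda>k. \<beta>' (Suc k)", OF i2(2) pseq_shift[OF pa' n0] pbs b1 b2] by simp
    ultimately show ?thesis using proj_lemma(2)[of n Gzx \<alpha>' \<beta>', OF i2(2) pa' pb' b1 b2] by (simp add: prod_eq_iff)
  qed
  have "lagrangian_hypercube n M"
    unfolding lagrangian_hypercube_def pw pzx using mj assms by blast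
  then show ?thesis using pw pzx by blast
qed


end
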